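(* Assume $\lambda d(1-s^d_i)>\gamma$ for all $d,i$. A social state $x^*\in\mathcal{X}$ is a Nash equilibrium if and only if there exists $y^*\in\mathbb{R}^D$ such that $(x^*,y^* )$ is a global minimizer of the optimization problem $$\min_{x\in\mathcal{X},\,y\in\mathbb{R}^D}\ \sum_{d=1}^D\Bigl(-EF^d(x)+y^d m^d\Bigr)\quad\text{s.t.}\quad F^d_i(x)\le y^d\ \ \forall d,\ \forall i\in\{1,\dots,n^d\},$$ where $EF^d(x)=\sum_{i=1}^{n^d}x^d_iF^d_i(x)$. (Moreover the optimal value of this problem is $0$.)
   Context: Setting: $D\in\mathbb{N}_+$ populations indexed by degree $d\in\{1,\dots,D\}$, degree distribution $m^d\in(0,1]$, $\sum_d m^d=1$, $\bar d=\sum_d d\,m^d$. Population $d$ has strategies $0\le s^d_1<\dots<s^d_{n^d}\le1$. A social state is $x=(x^d_i)$ with $x^d_i\ge0$, $\sum_i x^d_i=m^d$; $\mathcal{X}$ is the set of social states. Constants $\lambda>0,\gamma>0$, $\theta^d_i=\lambda d(1-s^d_i)$, and a relative reward $r<0$. For $x\in\mathcal{X}$, let $\bar\Theta(x)$ be the unique $\Theta>0$ solving $1=\frac{1}{\bar d}\sum_d d\sum_i\frac{x^d_i\theta^d_i}{\gamma+\theta^d_i\Theta}$, and $\bar I^d_i(x)=\frac{\theta^d_i\bar\Theta(x)}{\gamma+\theta^d_i\bar\Theta(x)}$ (the positive steady state of the SI dynamics $\dot I^d_i=-\gamma I^d_i+\lambda(1-s^d_i)(1-I^d_i)d\Theta$,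 $\Theta=\bar d^{-1}\sum_d\sum_i d x^d_i I^d_i$). The payoff of a degree-$d$ player using $s^d_i$ is $F^d_i(x)=s^d_i r-(1-s^d_i)\bar I^d_i(x)$. Nash equilibrium: $x\in\mathcal{X}$ is a Nash equilibrium if for every $d$ and every $i$ with $x^d_i>0$, $F^d_i(x)=\max_{j}F^d_j(x)$ (equivalently $x^d\in m^d\,BR^d(x)$, where $BR^d(x)$ is the set of probability vectors on $\{1,\dots,n^d\}$ supported on $\arg\max_j F^d_j(x)$). *)

theory Defs
  imports Complex_Main
begin

text \<open>Populations are indexed by d in {1..D}; population d has strategies indexed by
  i in {1..n d} with values s d i.  A social state is a function x :: nat => nat => real,
  x d i being the mass of degree-d players using strategy s d i.\<close>

definition dbar :: "nat \<Rightarrow> (nat \<Rightarrow> real) \<Rightarrow> real" where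
  "dbar D m = (\<Sum>d\<in>{1..D}. real d * m d)"

definition theta :: "real \<Rightarrow> (nat \<Rightarrow> nat \<Rightarrow> real) \<Rightarrow> nat \<Rightarrow> nat \<Rightarrow> real" where
  "theta lam s d i = lam * real d * (1 - s d i)"

definition social_states :: "nat \<Rightarrow> (nat \<Rightarrow> real) \<Rightarrow> (nat \<Rightarrow> nat) \<Rightarrow> (nat \<Rightarrow> nat \<Rightarrow> real) set" where
  "social_states D m n = {x. \<forall>d\<in>{1..D}. (\<forall>i\<in>{1..n d}. 0 \<le> x d i) \<and> (\<Sum>i\<in>{1..n d}. x d i) = m d}"

text \<open>The unique positive solution Theta of the steady-state equation.\<close>
definition Thetabar :: "real \<Rightarrow> real \<Rightarrow> nat \<Rightarrow> (nat \<Rightarrow> real) \<Rightarrow> (nat \<Rightarrow> nat) \<Rightarrow>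
    (nat \<Rightarrow> nat \<Rightarrow> real) \<Rightarrow> (nat \<Rightarrow> nat \<Rightarrow> real) \<Rightarrow> real" where
  "Thetabar lam gam D m n s x = (THE \<Theta>. \<Theta> > 0 \<and>
     1 = (1 / dbar D m) * (\<Sum>d\<in>{1..D}. real d *
            (\<Sum>i\<in>{1..n d}. x d i * theta lam s d i / (gam + theta lam s d i * \<Theta>))))"

definition Ibar :: "real \<Rightarrow> real \<Rightarrow> nat \<Rightarrow> (nat \<Rightarrow> real) \<Rightarrow> (nat \<Rightarrow> nat) \<Rightarrow>
    (nat \<Rightarrow> nat \<Rightarrow> real) \<Rightarrow> (nat \<Rightarrow> nat \<Rightarrow> real) \<Rightarrow> nat \<Rightarrow> nat \<Rightarrow> real" where
  "Ibar lam gam D m n s x d i =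
     (let T = Thetabar lam gam D m n s x in theta lam s d i * T / (gam + theta lam s d i * T))"

definition payoff :: "real \<Rightarrow> real \<Rightarrow> real \<Rightarrow> nat \<Rightarrow> (nat \<Rightarrow> real) \<Rightarrow> (nat \<Rightarrow> nat) \<Rightarrow>
    (nat \<Rightarrow> nat \<Rightarrow> real) \<Rightarrow> (nat \<Rightarrow> nat \<Rightarrow> real) \<Rightarrow> nat \<Rightarrow> nat \<Rightarrow> real" where
  "payoff lam gam r D m n s x d i = s d i * r - (1 - s d i) * Ibar lam gam D m n s x d i"

definition nash_eq :: "real \<Rightarrow> real \<Rightarrow> real \<Rightarrow> nat \<Rightarrow> (nat \<Rightarrow> real) \<Rightarrow> (nat \<Rightarrow> nat) \<Rightarrow>
    (nat \<Rightarrow> nat \<Rightarrow> real) \<Rightarrow> (nat \<Rightarrow> nat \<Rightarrow> real) \<Rightarrow> bool" where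
  "nash_eq lam gam r D m n s x \<longleftrightarrow> x \<in> social_states D m n \<and>
     (\<forall>d\<in>{1..D}. \<forall>i\<in>{1..n d}. x d i > 0 \<longrightarrow>
        payoff lam gam r D m n s x d i = (MAX j\<in>{1..n d}. payoff lam gam r D m n s x d j))"

definition EF :: "real \<Rightarrow> real \<Rightarrow> real \<Rightarrow> nat \<Rightarrow> (nat \<Rightarrow> real) \<Rightarrow> (nat \<Rightarrow> nat) \<Rightarrow>
    (nat \<Rightarrow> nat \<Rightarrow> real) \<Rightarrow> (nat \<Rightarrow> nat \<Rightarrow> real) \<Rightarrow> nat \<Rightarrow> real" where
  "EF lam gam r D m n s x d = (\<Sum>i\<in>{1..n d}. x d i * payoff lam gam r D m n s x d i)"

definition objective :: "real \<Rightarrow> real \<Rightarrow> real \<Rightarrow> nat \<Rightarrow> (nat \<Rightarrow> real) \<Rightarrow> (nat \<Rightarrow> nat) \<Rightarrow>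
    (nat \<Rightarrow> nat \<Rightarrow> real) \<Rightarrow> (nat \<Rightarrow> nat \<Rightarrow> real) \<Rightarrow> (nat \<Rightarrow> real) \<Rightarrow> real" where
  "objective lam gam r D m n s x y = (\<Sum>d\<in>{1..D}. - EF lam gam r D m n s x d + y d * m d)"

definition feasible :: "real \<Rightarrow> real \<Rightarrow> real \<Rightarrow> nat \<Rightarrow> (nat \<Rightarrow> real) \<Rightarrow> (nat \<Rightarrow> nat) \<Rightarrow>
    (nat \<Rightarrow> nat \<Rightarrow> real) \<Rightarrow> (nat \<Rightarrow> nat \<Rightarrow> real) \<Rightarrow> (nat \<Rightarrow> real) \<Rightarrow> bool" where
  "feasible lam gam r D m n s x y \<longleftrightarrow> x \<in> social_states D m n \<and>
     (\<forall>d\<in>{1..D}. \<forall>i\<in>{1..n d}. payoff lam gam r D m n s x d i \<le> y d)"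

end

theory Submission
  imports Defs
begin


lemma obj_nonneg:
  assumes "feasible lam gam r D m n s x y"
  shows "0 \<le> objective lam gam r D m n s x y"
proof -
  have "\<forall>d\<in>{1..D}. EF lam gam r D m n s x d \<le> y d * m d"
  proof
    fix d assume d: "d \<in> {1..D}"
    have st: "\<forall>i\<in>{1..n d}. 0 \<le> x d i" "(\<Sum>i\<in>{1..n d}. x d i) = m d"
      using assms d by (auto simp: feasible_def social_states_def)
    have "EF lam gam r D m n s x d \<le> (\<Sum>i\<in>{1..n d}. x d i * y d)"
      unfolding EF_def
      by (rule sum_mono) (use assms d st in \<open>auto simp: feasible_def intro!: mult_left_mono\<close>)
    also have "\<dots> = y d * m d" using st(2) by (simp add: sum_distrib_right[symmetric])
    finally show "EF lam gam r D m n s x d \<le> y d * m d" .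
  qed
  then show ?thesis unfolding objective_def by (auto intro!: sum_nonneg)
qed

lemma obj_zero_nash:
  assumes f: "feasible lam gam r D m n s x y" and z: "objective lam gam r D m n s x y = 0"
  shows "nash_eq lam gam r D m n s x"
proof -
  have xst: "x \<in> social_states D m n" using f by (simp add: feasible_def)
  have le: "\<forall>d\<in>{1..D}. EF lam gam r D m n s x d \<le> y d * m d"
  proof
    fix d assume d: "d \<in> {1..D}"
    have st: "\<forall>i\<in>{1..n d}. 0 \<le> x d i" "(\<Sum>i\<in>{1..n d}. x d i) = m d"
      using f d by (auto simp: feasible_def social_states_def)
    have "EF lam gam r D m n s x d \<le> (\<Sum>i\<in>{1..n d}. x d i * y d)"
      unfolding EF_def
      by (rule sum_mono) (use f d st in \<open>auto simp: feasible_def intro!: mult_left_mono\<close>)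
    also have "\<dots> = y d * m d" using st(2) by (simp add: sum_distrib_right[symmetric])
    finally show "EF lam gam r D m n s x d \<le> y d * m d" .
  qed
  have eq0: "\<forall>d\<in>{1..D}. - EF lam gam r D m n s x d + y d * m d = 0"
    using z le unfolding objective_def
    by (subst (asm) sum_nonneg_eq_0_iff) auto
  show ?thesis unfolding nash_eq_def
  proof (intro conjI xst ballI impI)
    fix d i assume d: "d \<in> {1..D}" and i: "i \<in> {1..n d}" and xp: "0 < x d i"
    have st: "\<forall>i\<in>{1..n d}. 0 \<le> x d i" "(\<Sum>i\<in>{1..n d}. x d i) = m d"
      using f d by (auto simp: feasible_def social_states_def)
    have yle: "\<forall>j\<in>{1..n d}. payoff lam gam r D m n s x d j \<le> y d" using f d by (simp add: feasible_def)
    have "(\<Sum>j\<in>{1..n d}. x d j * (y d - payoff lam gam r D m n s x d j))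
        = y d * m d - EF lam gam r D m n s x d"
      using st(2) by (simp add: EF_def right_diff_distrib sum_subtractf sum_distrib_left[symmetric] mult.commute)
    also have "\<dots> = 0" using eq0 d by auto
    finally have "\<forall>j\<in>{1..n d}. x d j * (y d - payoff lam gam r D m n s x d j) = 0"
      by (subst (asm) sum_nonneg_eq_0_iff) (use st yle in auto)
    then have Fi: "payoff lam gam r D m n s x d i = y d" using i xp by (metis mult_eq_0_iff less_irrefl eq_iff_diff_eq_0)
    show "payoff lam gam r D m n s x d i = (MAX j\<in>{1..n d}. payoff lam gam r D m n s x d j)"
      by (rule Max_eqI[symmetric]) (use i yle Fi in \<open>auto intro!: image_eqI[where x=i]\<close>)
  qed
qed

lemma nash_obj:
  assumes ne: "nash_eq lam gam r D m n s x" and npos: "\<forall>d\<in>{1..D}. n d \<ge> 1"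
  defines "y \<equiv> (\<lambda>d. MAX j\<in>{1..n d}. payoff lam gam r D m n s x d j)"
  shows "feasible lam gam r D m n s x y \<and> objective lam gam r D m n s x y = 0"
proof
  have xst: "x \<in> social_states D m n" using ne by (simp add: nash_eq_def)
  show "feasible lam gam r D m n s x y" unfolding feasible_def y_def
    using xst by auto
  have "\<forall>d\<in>{1..D}. - EF lam gam r D m n s x d + y d * m d = 0"
  proof
    fix d assume d: "d \<in> {1..D}"
    have st: "\<forall>i\<in>{1..n d}. 0 \<le> x d i" "(\<Sum>i\<in>{1..n d}. x d i) = m d"
      using xst d by (auto simp: social_states_def)
    have "- EF lam gam r D m n s x d + y d * m d
        = (\<Sum>j\<in>{1..n d}. x d j * (y d - payoff lam gam r D m n s x d j))"
      using st(2) by (simp add: EF_def right_diff_distrib sum_subtractf sum_distrib_left[symmetric] mult.commute)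
    also have "\<dots> = 0"
    proof (rule sum.neutral, rule ballI)
      fix j assume j: "j \<in> {1..n d}"
      show "x d j * (y d - payoff lam gam r D m n s x d j) = 0"
      proof (cases "x d j > 0")
        case True then show ?thesis using ne d j by (simp add: nash_eq_def y_def)
      next
        case False then show ?thesis using st j by force
      qed
    qed
    finally show "- EF lam gam r D m n s x d + y d * m d = 0" .
  qed
  then show "objective lam gam r D m n s x y = 0" unfolding objective_def by simp
qed



locale setting =
  fixes lam gam r :: real and D :: nat and m :: "nat \<Rightarrow> real" and n :: "nat \<Rightarrow> nat"
    and s :: "nat \<Rightarrow> nat \<Rightarrow> real"
  assumes D_pos: "D \<ge> 1" and m_pos: "\<forall>d\<in>{1..D}. 0 < m d"
    and n_pos: "\<forall>d\<in>{1..D}. n d \<ge> 1" and gam_pos: "gam > 0"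
    and hyp: "\<forall>d\<in>{1..D}. \<forall>i\<in>{1..n d}. lam * real d * (1 - s d i) > gam"
begin

abbreviation th where "th d i \<equiv> theta lam s d i"

lemma th_gt: "d \<in> {1..D} \<Longrightarrow> i \<in> {1..n d} \<Longrightarrow> th d i > gam"
  using hyp by (simp add: theta_def)

lemma dbar_pos: "dbar D m > 0"
  unfolding dbar_def using D_pos m_pos by (intro sum_pos) auto

definition g where "g d i T = th d i / (gam + th d i * T)"
definition Phi where "Phi x T = (1 / dbar D m) * (\<Sum>d\<in>{1..D}. real d *
            (\<Sum>i\<in>{1..n d}. x d i * theta lam s d i / (gam + theta lam s d i * T)))"

lemma Phi_g: "Phi x T = (1 / dbar D m) * (\<Sum>d\<in>{1..D}. real d * (\<Sum>i\<in>{1..n d}. x d i * g d i T))"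
  by (simp add: Phi_def g_def)

lemma g_dec: assumes "d \<in> {1..D}" "i \<in> {1..n d}" "0 \<le> T1" "T1 < T2"
  shows "g d i T2 < g d i T1"
proof -
  have t: "th d i > gam" using th_gt assms by auto
  have "gam + th d i * T1 < gam + th d i * T2" using t gam_pos assms by (simp add: mult_strict_left_mono)
  moreover have "0 < gam + th d i * T1" using t gam_pos assms by (simp add: add_pos_nonneg)
  moreover have "0 < gam + th d i * T2" using calculation by linarith
  ultimately show ?thesis unfolding g_def using t gam_pos
    by (intro divide_strict_left_mono) (auto intro!: mult_pos_pos)
qed

lemma Phi_dec: assumes x: "x \<in> social_states D m n" and T: "0 < T1" "T1 < T2"
  shows "Phi x T2 < Phi x T1"
proof -
  have st: "\<And>d. d \<in> {1..D} \<Longrightarrow> (\<forall>i\<in>{1..n d}. 0 \<le> x d i) \<and> (\<Sum>i\<in>{1..n d}. x d i) = m d"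
    using x by (auto simp: social_states_def)
  have inner: "\<And>d. d \<in> {1..D} \<Longrightarrow> (\<Sum>i\<in>{1..n d}. x d i * g d i T2) < (\<Sum>i\<in>{1..n d}. x d i * g d i T1)"
  proof -
    fix d assume d: "d \<in> {1..D}"
    obtain i where i: "i \<in> {1..n d}" "x d i > 0"
    proof (rule ccontr)
      assume "\<not> thesis"
      then have "\<forall>i\<in>{1..n d}. x d i = 0" using st[OF d] that by force
      then have "m d = 0" using st[OF d] by simp
      then show False using m_pos d by (metis less_irrefl)
    qed
    show "(\<Sum>i\<in>{1..n d}. x d i * g d i T2) < (\<Sum>i\<in>{1..n d}. x d i * g d i T1)"
    proof (rule sum_strict_mono_ex1)
      have gle: "\<forall>j\<in>{1..n d}. g d j T2 \<le> g d j T1"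
        using g_dec[OF d _ _ T(2)] T(1) by (auto intro: less_imp_le)
      show "\<forall>j\<in>{1..n d}. x d j * g d j T2 \<le> x d j * g d j T1"
        using st[OF d] gle by (auto intro!: mult_left_mono)
      show "\<exists>j\<in>{1..n d}. x d j * g d j T2 < x d j * g d j T1"
        using i g_dec[OF d i(1) _ T(2)] T(1) by (intro bexI[of _ i]) auto
    qed simp
  qed
  have "(\<Sum>d\<in>{1..D}. real d * (\<Sum>i\<in>{1..n d}. x d i * g d i T2))
      < (\<Sum>d\<in>{1..D}. real d * (\<Sum>i\<in>{1..n d}. x d i * g d i T1))"
    using D_pos inner by (intro sum_strict_mono) auto
  then show ?thesis unfolding Phi_g using dbar_pos by (simp add: divide_strict_right_mono)
qed

lemma Thetabar_eq: assumes x: "x \<in> social_states D m n" and T: "0 < T" "Phi x T = 1"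
  shows "Thetabar lam gam D m n s x = T"
  unfolding Thetabar_def
proof (rule the_equality)
  show "0 < T \<and> 1 = 1 / dbar D m * (\<Sum>d = 1..D. real d * (\<Sum>i = 1..n d. x d i * theta lam s d i / (gam + theta lam s d i * T)))"
    using T by (simp add: Phi_def)
  fix \<Theta> assume h: "0 < \<Theta> \<and> 1 = 1 / dbar D m * (\<Sum>d = 1..D. real d * (\<Sum>i = 1..n d. x d i * theta lam s d i / (gam + theta lam s d i * \<Theta>)))"
  then have h2: "Phi x \<Theta> = 1" "0 < \<Theta>" by (simp_all add: Phi_def)
  show "\<Theta> = T"
  proof (rule ccontr)
    assume "\<Theta> \<noteq> T"
    then consider "\<Theta> < T" | "T < \<Theta>" by linarith
    then show False
      using Phi_dec[OF x h2(2)] Phi_dec[OF x T(1)] h2(1) T(2) by cases fastforce+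
  qed
qed

end


context setting begin

definition P where "P d i T = s d i * r - (1 - s d i) * (th d i * T / (gam + th d i * T))"
definition M where "M d T = (MAX j\<in>{1..n d}. P d j T)"
definition Bst where "Bst d T = {i\<in>{1..n d}. P d i T = M d T}"
definition glo where "glo d T = Min ((\<lambda>i. g d i T) ` Bst d T)"
definition ghi where "ghi d T = Max ((\<lambda>i. g d i T) ` Bst d T)"
definition lo where "lo T = (1 / dbar D m) * (\<Sum>d\<in>{1..D}. real d * m d * glo d T)"
definition hi where "hi T = (1 / dbar D m) * (\<Sum>d\<in>{1..D}. real d * m d * ghi d T)"

lemma P_le_M: "i \<in> {1..n d} \<Longrightarrow> P d i T \<le> M d T"
  unfolding M_def by (rule Max_ge) auto

lemma Bst_sub: "Bst d T \<subseteq> {1..n d}" by (auto simp: Bst_def)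

lemma Bst_ne: assumes "d \<in> {1..D}" shows "Bst d T \<noteq> {}"
proof -
  have ne: "{1..n d} \<noteq> {}" using n_pos assms by auto
  have "M d T \<in> (\<lambda>j. P d j T) ` {1..n d}" unfolding M_def using ne by (intro Max_in) auto
  then show ?thesis by (auto simp: Bst_def)
qed

lemma fin_Bst: "finite (Bst d T)" using Bst_sub finite_subset by blast

lemma glo_in: assumes "d \<in> {1..D}" obtains k where "k \<in> Bst d T" "g d k T = glo d T"
proof -
  have "glo d T \<in> (\<lambda>i. g d i T) ` Bst d T" unfolding glo_def
    using Bst_ne[OF assms] fin_Bst by (intro Min_in) auto
  then show ?thesis using that by auto
qed

lemma ghi_in: assumes "d \<in> {1..D}" obtains k where "k \<in> Bst d T" "g d k T = ghi d T"
proof -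
  have "ghi d T \<in> (\<lambda>i. g d i T) ` Bst d T" unfolding ghi_def
    using Bst_ne[OF assms] fin_Bst by (intro Max_in) auto
  then show ?thesis using that by auto
qed

lemma glo_le: "k \<in> Bst d T \<Longrightarrow> glo d T \<le> g d k T"
  unfolding glo_def using fin_Bst by (intro Min_le) auto

lemma ghi_ge: "k \<in> Bst d T \<Longrightarrow> g d k T \<le> ghi d T"
  unfolding ghi_def using fin_Bst by (intro Max_ge) auto

lemma glo_ghi: "d \<in> {1..D} \<Longrightarrow> glo d T \<le> ghi d T"
  by (metis glo_in glo_le ghi_ge order_trans)

lemma sum_dm: "(\<Sum>d\<in>{1..D}. real d * m d) = dbar D m" by (simp add: dbar_def)

lemma lo_hi: "lo T \<le> hi T"
  unfolding lo_def hi_def using dbar_pos m_pos glo_ghi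
  by (intro mult_left_mono sum_mono) (auto intro!: mult_left_mono mult_nonneg_nonneg less_imp_le)

lemma denom_pos: "d \<in> {1..D} \<Longrightarrow> i \<in> {1..n d} \<Longrightarrow> 0 \<le> T \<Longrightarrow> 0 < gam + th d i * T"
  using th_gt[of d i] gam_pos by (simp add: add_pos_nonneg)

lemma P_cont: "d \<in> {1..D} \<Longrightarrow> i \<in> {1..n d} \<Longrightarrow> 0 < T0 \<Longrightarrow> ((\<lambda>T. P d i T) \<longlongrightarrow> P d i T0) (nhds T0)"
  unfolding P_def using denom_pos[of d i T0]
  by (intro tendsto_intros) (auto simp: filterlim_ident)


lemma ev_pos: "0 < (T0::real) \<Longrightarrow> eventually (\<lambda>T. 0 < T) (nhds T0)"
  using order_tendstoD(1)[of "\<lambda>x. x" T0 "nhds T0" 0] by (simp add: filterlim_ident)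

lemma Bst_stable: assumes T0: "0 < T0"
  shows "eventually (\<lambda>T. \<forall>d\<in>{1..D}. Bst d T \<subseteq> Bst d T0) (nhds T0)"
proof -
  have ev1: "eventually (\<lambda>T. \<forall>d\<in>{1..D}. \<forall>i\<in>{1..n d}. \<forall>j\<in>{1..n d}.
      P d j T0 < P d i T0 \<longrightarrow> P d j T < P d i T) (nhds T0)"
  proof (intro eventually_ball_finite ballI finite_atLeastAtMost)
    fix d i j assume d: "d \<in> {1..D}" and i: "i \<in> {1..n d}" and j: "j \<in> {1..n d}"
    show "eventually (\<lambda>T. P d j T0 < P d i T0 \<longrightarrow> P d j T < P d i T) (nhds T0)"
    proof (cases "P d j T0 < P d i T0")
      case True
      have "((\<lambda>T. P d i T - P d j T) \<longlongrightarrow> P d i T0 - P d j T0) (nhds T0)"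
        using P_cont[OF d i T0] P_cont[OF d j T0] by (intro tendsto_diff)
      from order_tendstoD(1)[OF this, of 0] True
      have "eventually (\<lambda>T. 0 < P d i T - P d j T) (nhds T0)" by simp
      then show ?thesis by eventually_elim simp
    qed simp
  qed
  show ?thesis
  proof (rule eventually_mono[OF ev1], intro ballI subsetI)
    fix T d j
    assume H: "\<forall>d\<in>{1..D}. \<forall>i\<in>{1..n d}. \<forall>j\<in>{1..n d}. P d j T0 < P d i T0 \<longrightarrow> P d j T < P d i T"
      and d: "d \<in> {1..D}" and jB: "j \<in> Bst d T"
    obtain i where iB: "i \<in> Bst d T0" using Bst_ne[OF d] by blast
    have j: "j \<in> {1..n d}" and i: "i \<in> {1..n d}" using jB iB Bst_sub by blast+
    show "j \<in> Bst d T0"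
    proof (rule ccontr)
      assume "j \<notin> Bst d T0"
      then have "P d j T0 < P d i T0" using P_le_M[OF j, of T0] iB j by (auto simp: Bst_def)
      then have "P d j T < P d i T" using H d i j by blast
      moreover have "P d i T \<le> P d j T" using P_le_M[OF i, of T] jB by (auto simp: Bst_def)
      ultimately show False by simp
    qed
  qed
qed

lemma g_cont: "d \<in> {1..D} \<Longrightarrow> i \<in> {1..n d} \<Longrightarrow> 0 < T0 \<Longrightarrow> ((\<lambda>T. g d i T) \<longlongrightarrow> g d i T0) (nhds T0)"
  unfolding g_def using denom_pos[of d i T0]
  by (intro tendsto_intros) (auto simp: filterlim_ident)

lemma sum_dm_shift: "(\<Sum>d\<in>{1..D}. real d * m d * (f d - e)) = (\<Sum>d\<in>{1..D}. real d * m d * f d) - e * dbar D m"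
proof -
  have "(\<Sum>d\<in>{1..D}. real d * m d * (f d - e)) = (\<Sum>d\<in>{1..D}. real d * m d * f d - e * (real d * m d))"
    by (rule sum.cong) (simp_all add: algebra_simps)
  also have "\<dots> = (\<Sum>d\<in>{1..D}. real d * m d * f d) - e * dbar D m"
    by (simp add: sum_subtractf sum_distrib_left dbar_def)
  finally show ?thesis .
qed

lemma sum_dm_shift': "(\<Sum>d\<in>{1..D}. real d * m d * (f d + e)) = (\<Sum>d\<in>{1..D}. real d * m d * f d) + e * dbar D m"
proof -
  have "(\<Sum>d\<in>{1..D}. real d * m d * (f d + e)) = (\<Sum>d\<in>{1..D}. real d * m d * f d + e * (real d * m d))"
    by (rule sum.cong) (simp_all add: algebra_simps)
  also have "\<dots> = (\<Sum>d\<in>{1..D}. real d * m d * f d) + e * dbar D m"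
    by (simp add: sum.distrib sum_distrib_left dbar_def)
  finally show ?thesis .
qed

lemma U_ev: assumes T0: "0 < T0" and l: "1 < lo T0"
  shows "eventually (\<lambda>T. 0 < T \<and> 1 < lo T) (nhds T0)"
proof -
  define e where "e = lo T0 - 1"
  have e: "0 < e" using l by (simp add: e_def)
  have evg: "eventually (\<lambda>T. \<forall>d\<in>{1..D}. \<forall>i\<in>{1..n d}. g d i T0 - e < g d i T) (nhds T0)"
  proof (intro eventually_ball_finite ballI finite_atLeastAtMost)
    fix d i assume d: "d \<in> {1..D}" and i: "i \<in> {1..n d}"
    show "eventually (\<lambda>T. g d i T0 - e < g d i T) (nhds T0)"
      using order_tendstoD(1)[OF g_cont[OF d i T0], of "g d i T0 - e"] e by simp
  qed
  show ?thesis
  proof (rule eventually_mono[OF eventually_conj[OF ev_pos[OF T0] eventually_conj[OF evg Bst_stable[OF T0]]]], intro conjI)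
    fix T assume H: "0 < T \<and> (\<forall>d\<in>{1..D}. \<forall>i\<in>{1..n d}. g d i T0 - e < g d i T) \<and>
        (\<forall>d\<in>{1..D}. Bst d T \<subseteq> Bst d T0)"
    show "0 < T" using H by simp
    have gl: "\<forall>d\<in>{1..D}. glo d T0 - e < glo d T"
    proof
      fix d assume d: "d \<in> {1..D}"
      obtain k where k: "k \<in> Bst d T" "g d k T = glo d T" using glo_in[OF d] by blast
      have k0: "k \<in> Bst d T0" using H d k by blast
      have "k \<in> {1..n d}" using k Bst_sub by blast
      then have "g d k T0 - e < g d k T" using H d by blast
      then show "glo d T0 - e < glo d T" using glo_le[OF k0] k by simp
    qed
    have "(\<Sum>d\<in>{1..D}. real d * m d * (glo d T0 - e)) < (\<Sum>d\<in>{1..D}. real d * m d * glo d T)"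
      using D_pos gl m_pos by (intro sum_strict_mono) (auto intro!: mult_strict_left_mono)
    then have "(\<Sum>d\<in>{1..D}. real d * m d * glo d T0) - e * dbar D m < (\<Sum>d\<in>{1..D}. real d * m d * glo d T)"
      using sum_dm_shift[of "\<lambda>d. glo d T0" e] by simp
    then have "(1 / dbar D m) * ((\<Sum>d\<in>{1..D}. real d * m d * glo d T0) - e * dbar D m) < lo T"
      unfolding lo_def using dbar_pos by (simp add: divide_strict_right_mono)
    moreover have "(1 / dbar D m) * ((\<Sum>d\<in>{1..D}. real d * m d * glo d T0) - e * dbar D m) = lo T0 - e"
      unfolding lo_def using dbar_pos by (simp add: field_simps)
    ultimately show "1 < lo T" by (simp add: e_def)
  qed
qed

lemma L_ev: assumes T0: "0 < T0" and l: "hi T0 < 1"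
  shows "eventually (\<lambda>T. 0 < T \<and> hi T < 1) (nhds T0)"
proof -
  define e where "e = 1 - hi T0"
  have e: "0 < e" using l by (simp add: e_def)
  have evg: "eventually (\<lambda>T. \<forall>d\<in>{1..D}. \<forall>i\<in>{1..n d}. g d i T < g d i T0 + e) (nhds T0)"
  proof (intro eventually_ball_finite ballI finite_atLeastAtMost)
    fix d i assume d: "d \<in> {1..D}" and i: "i \<in> {1..n d}"
    show "eventually (\<lambda>T. g d i T < g d i T0 + e) (nhds T0)"
      using order_tendstoD(2)[OF g_cont[OF d i T0], of "g d i T0 + e"] e by simp
  qed
  show ?thesis
  proof (rule eventually_mono[OF eventually_conj[OF ev_pos[OF T0] eventually_conj[OF evg Bst_stable[OF T0]]]], intro conjI)
    fix T assume H: "0 < T \<and> (\<forall>d\<in>{1..D}. \<forall>i\<in>{1..n d}. g d i T < g d i T0 + e) \<and>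
        (\<forall>d\<in>{1..D}. Bst d T \<subseteq> Bst d T0)"
    show "0 < T" using H by simp
    have gl: "\<forall>d\<in>{1..D}. ghi d T < ghi d T0 + e"
    proof
      fix d assume d: "d \<in> {1..D}"
      obtain k where k: "k \<in> Bst d T" "g d k T = ghi d T" using ghi_in[OF d] by blast
      have k0: "k \<in> Bst d T0" using H d k by blast
      have "k \<in> {1..n d}" using k Bst_sub by blast
      then have "g d k T < g d k T0 + e" using H d by blast
      then show "ghi d T < ghi d T0 + e" using ghi_ge[OF k0] k by simp
    qed
    have "(\<Sum>d\<in>{1..D}. real d * m d * ghi d T) < (\<Sum>d\<in>{1..D}. real d * m d * (ghi d T0 + e))"
      using D_pos gl m_pos by (intro sum_strict_mono) (auto intro!: mult_strict_left_mono)
    then have "(\<Sum>d\<in>{1..D}. real d * m d * ghi d T) < (\<Sum>d\<in>{1..D}. real d * m d * ghi d T0) + e * dbar D m"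
      using sum_dm_shift'[of "\<lambda>d. ghi d T0" e] by simp
    then have "hi T < (1 / dbar D m) * ((\<Sum>d\<in>{1..D}. real d * m d * ghi d T0) + e * dbar D m)"
      unfolding hi_def using dbar_pos by (simp add: divide_strict_right_mono)
    moreover have "(1 / dbar D m) * ((\<Sum>d\<in>{1..D}. real d * m d * ghi d T0) + e * dbar D m) = hi T0 + e"
      unfolding hi_def using dbar_pos by (simp add: field_simps)
    ultimately show "hi T < 1" by (simp add: e_def)
  qed
qed

lemma U_ne: "\<exists>T>0. 1 < lo T"
proof -
  have evg: "eventually (\<lambda>T. \<forall>d\<in>{1..D}. \<forall>i\<in>{1..n d}. 1 < g d i T) (at_right (0::real))"
  proof (intro eventually_ball_finite ballI finite_atLeastAtMost)
    fix d i assume d: "d \<in> {1..D}" and i: "i \<in> {1..n d}"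
    have t: "th d i > gam" using th_gt[OF d i] .
    have "((\<lambda>T. g d i T) \<longlongrightarrow> th d i / (gam + th d i * 0)) (at_right 0)"
      unfolding g_def using gam_pos by (intro tendsto_intros) auto
    moreover have "1 < th d i / (gam + th d i * 0)" using t gam_pos by simp
    ultimately show "eventually (\<lambda>T. 1 < g d i T) (at_right 0)"
      by (rule order_tendstoD(1))
  qed
  obtain T where T: "0 < T" "\<forall>d\<in>{1..D}. \<forall>i\<in>{1..n d}. 1 < g d i T"
  proof -
    have "\<exists>T. 0 < T \<and> (\<forall>d\<in>{1..D}. \<forall>i\<in>{1..n d}. 1 < g d i T)"
      using eventually_happens[OF eventually_conj[OF eventually_at_right_less evg]] by simp
    then show ?thesis using that by blast
  qed
  have gl: "\<forall>d\<in>{1..D}. 1 < glo d T"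
  proof
    fix d assume d: "d \<in> {1..D}"
    obtain k where k: "k \<in> Bst d T" "g d k T = glo d T" using glo_in[OF d] by blast
    have "k \<in> {1..n d}" using k Bst_sub by blast
    then have "1 < g d k T" using T(2) d by blast
    then show "1 < glo d T" using k(2) by simp
  qed
  have "(\<Sum>d\<in>{1..D}. real d * m d * 1) < (\<Sum>d\<in>{1..D}. real d * m d * glo d T)"
    using D_pos gl m_pos by (intro sum_strict_mono) (auto intro!: mult_strict_left_mono)
  then have "dbar D m < (\<Sum>d\<in>{1..D}. real d * m d * glo d T)" by (simp add: dbar_def)
  then have "1 < lo T" unfolding lo_def using dbar_pos by (simp add: field_simps)
  then show ?thesis using T by blast
qed

lemma L_ne: "hi 1 < 1"
proof -
  have gl: "\<forall>d\<in>{1..D}. ghi d 1 < 1"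
  proof
    fix d assume d: "d \<in> {1..D}"
    obtain k where k: "k \<in> Bst d 1" "g d k 1 = ghi d 1" using ghi_in[OF d] by blast
    have "k \<in> {1..n d}" using k Bst_sub by blast
    then have "th d k > gam" using th_gt d by blast
    then have "g d k 1 < 1" unfolding g_def using gam_pos by simp
    then show "ghi d 1 < 1" using k by simp
  qed
  have "(\<Sum>d\<in>{1..D}. real d * m d * ghi d 1) < (\<Sum>d\<in>{1..D}. real d * m d * 1)"
    using D_pos gl m_pos by (intro sum_strict_mono) (auto intro!: mult_strict_left_mono)
  then have "(\<Sum>d\<in>{1..D}. real d * m d * ghi d 1) < dbar D m" by (simp add: dbar_def)
  then show "hi 1 < 1" unfolding hi_def using dbar_pos by (simp add: field_simps)
qed

lemma exists_T: "\<exists>T>0. lo T \<le> 1 \<and> 1 \<le> hi T"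
proof (rule ccontr)
  assume H: "\<not> ?thesis"
  define U where "U = {T::real. 0 < T \<and> 1 < lo T}"
  define V where "V = {T::real. 0 < T \<and> hi T < 1}"
  have oU: "open U" proof (subst open_subopen, intro ballI)
    fix T0 assume "T0 \<in> U"
    then have "eventually (\<lambda>T. 0 < T \<and> 1 < lo T) (nhds T0)" using U_ev by (auto simp: U_def)
    then obtain S where "open S" "T0 \<in> S" "\<forall>x\<in>S. 0 < x \<and> 1 < lo x" by (auto simp: eventually_nhds)
    then show "\<exists>S. open S \<and> T0 \<in> S \<and> S \<subseteq> U" by (auto simp: U_def)
  qed
  have oV: "open V" proof (subst open_subopen, intro ballI)
    fix T0 assume "T0 \<in> V"
    then have "eventually (\<lambda>T. 0 < T \<and> hi T < 1) (nhds T0)" using L_ev by (auto simp: V_def)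
    then obtain S where "open S" "T0 \<in> S" "\<forall>x\<in>S. 0 < x \<and> hi x < 1" by (auto simp: eventually_nhds)
    then show "\<exists>S. open S \<and> T0 \<in> S \<and> S \<subseteq> V" by (auto simp: V_def)
  qed
  have dis: "U \<inter> V \<inter> {0<..} = {}"
  proof (rule equalityI, rule subsetI)
    fix T assume "T \<in> U \<inter> V \<inter> {0<..}"
    then have "1 < lo T" "hi T < 1" by (simp_all add: U_def V_def)
    with lo_hi[of T] show "T \<in> {}" by linarith
  qed simp
  have cov: "{0<..} \<subseteq> U \<union> V"
  proof
    fix T assume "T \<in> {0::real<..}"
    then have T: "0 < T" by simp
    then have "\<not> (lo T \<le> 1 \<and> 1 \<le> hi T)" using H by blast
    then show "T \<in> U \<union> V" using T unfolding U_def V_def by auto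
  qed
  have "U \<inter> {0<..} = {} \<or> V \<inter> {0<..} = {}"
    by (rule connectedD[OF connected_Ioi oU oV dis cov])
  moreover have "U \<inter> {0<..} \<noteq> {}" using U_ne by (auto simp: U_def)
  moreover have "V \<inter> {0<..} \<noteq> {}" 
  proof -
    have "(1::real) \<in> V \<inter> {0<..}" using L_ne by (simp add: V_def)
    then show ?thesis by blast
  qed
  ultimately show False by blast
qed

lemma payoff_P: assumes "Thetabar lam gam D m n s x = T"
  shows "payoff lam gam r D m n s x d i = P d i T"
  unfolding payoff_def Ibar_def Let_def P_def assms by simp

lemma exists_nash: "\<exists>x. nash_eq lam gam r D m n s x"
proof -
  obtain T where T: "0 < T" "lo T \<le> 1" "1 \<le> hi T" using exists_T by blast
  define il where "il d = (SOME k. k \<in> Bst d T \<and> g d k T = glo d T)" for d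
  define ih where "ih d = (SOME k. k \<in> Bst d T \<and> g d k T = ghi d T)" for d
  have il: "il d \<in> Bst d T \<and> g d (il d) T = glo d T" if "d \<in> {1..D}" for d
    unfolding il_def by (rule someI_ex) (use glo_in[OF that] in blast)
  have ih: "ih d \<in> Bst d T \<and> g d (ih d) T = ghi d T" if "d \<in> {1..D}" for d
    unfolding ih_def by (rule someI_ex) (use ghi_in[OF that] in blast)
  define t where "t = (if lo T = hi T then 1 else (hi T - 1) / (hi T - lo T))"
  have t01: "0 \<le> t" "t \<le> 1" using T lo_hi[of T] by (auto simp: t_def field_simps)
  have tPhi: "t * lo T + (1 - t) * hi T = 1"
  proof (cases "lo T = hi T")
    case True then show ?thesis using T by (simp add: t_def)
  next
    case False
    then have "lo T < hi T" using lo_hi[of T] by simp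
    then have "t * (hi T - lo T) = hi T - 1" using False by (simp add: t_def)
    moreover have "t * lo T + (1 - t) * hi T = hi T - t * (hi T - lo T)" by (simp add: algebra_simps)
    ultimately show ?thesis by linarith
  qed
  define x where "x d i = m d * ((if i = il d then t else 0) + (if i = ih d then 1 - t else 0))" for d i
  have sumx: "(\<Sum>i\<in>{1..n d}. x d i * h i) = m d * (t * h (il d) + (1 - t) * h (ih d))"
    if d: "d \<in> {1..D}" for d and h :: "nat \<Rightarrow> real"
  proof -
    have ild: "il d \<in> {1..n d}" and ihd: "ih d \<in> {1..n d}" using il[OF d] ih[OF d] Bst_sub by blast+
    have "(\<Sum>i\<in>{1..n d}. x d i * h i) = (\<Sum>i\<in>{1..n d}. (if i = il d then m d * t * h i else 0)
         + (if i = ih d then m d * (1 - t) * h i else 0))"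
      by (rule sum.cong) (auto simp: x_def algebra_simps)
    also have "\<dots> = m d * t * h (il d) + m d * (1 - t) * h (ih d)"
      using ild ihd by (simp add: sum.distrib sum.delta)
    finally show ?thesis by (simp add: algebra_simps)
  qed
  have xst: "x \<in> social_states D m n"
    unfolding social_states_def
  proof (intro CollectI ballI conjI)
    fix d i assume d: "d \<in> {1..D}" and i: "i \<in> {1..n d}"
    have "0 \<le> m d" using m_pos d by (simp add: less_imp_le)
    then show "0 \<le> x d i" unfolding x_def using t01 by (auto intro!: mult_nonneg_nonneg)
  next
    fix d assume d: "d \<in> {1..D}"
    show "(\<Sum>i\<in>{1..n d}. x d i) = m d" using sumx[OF d, of "\<lambda>_. 1"] by simp
  qed
  have "Phi x T = (1 / dbar D m) * (\<Sum>d\<in>{1..D}. real d * (m d * (t * glo d T + (1 - t) * ghi d T)))"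
    unfolding Phi_g
    by (rule arg_cong[where f = "\<lambda>z. (1 / dbar D m) * z"], rule sum.cong)
       (use sumx[of _ "\<lambda>i. g _ i T"] il ih in auto)
  also have "\<dots> = (1 / dbar D m) * (t * (\<Sum>d\<in>{1..D}. real d * m d * glo d T)
       + (1 - t) * (\<Sum>d\<in>{1..D}. real d * m d * ghi d T))"
  proof -
    have "(\<Sum>d\<in>{1..D}. real d * (m d * (t * glo d T + (1 - t) * ghi d T)))
       = (\<Sum>d\<in>{1..D}. t * (real d * m d * glo d T) + (1 - t) * (real d * m d * ghi d T))"
      by (rule sum.cong) (simp_all add: algebra_simps)
    then show ?thesis by (simp add: sum.distrib sum_distrib_left)
  qed
  also have "\<dots> = t * lo T + (1 - t) * hi T" unfolding lo_def hi_def using dbar_pos by (simp add: field_simps)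
  also have "\<dots> = 1" by (rule tPhi)
  finally have Phi1: "Phi x T = 1" .
  have Th: "Thetabar lam gam D m n s x = T" by (rule Thetabar_eq[OF xst T(1) Phi1])
  have "nash_eq lam gam r D m n s x"
    unfolding nash_eq_def
  proof (intro conjI xst ballI impI)
    fix d i assume d: "d \<in> {1..D}" and i: "i \<in> {1..n d}" and xp: "0 < x d i"
    have "i = il d \<or> i = ih d" using xp by (auto simp: x_def split: if_splits)
    then have iB: "i \<in> Bst d T" using il[OF d] ih[OF d] by blast
    show "payoff lam gam r D m n s x d i = (MAX j\<in>{1..n d}. payoff lam gam r D m n s x d j)"
      using iB unfolding payoff_P[OF Th] by (simp add: Bst_def M_def)
  qed
  then show ?thesis by blast
qed

end

theorem theorem3:
  fixes lam gam r :: real and D :: nat and m :: "nat \<Rightarrow> real" and n :: "nat \<Rightarrow> nat"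
    and s :: "nat \<Rightarrow> nat \<Rightarrow> real" and xs :: "nat \<Rightarrow> nat \<Rightarrow> real"
  assumes D_pos: "D \<ge> 1"
    and m_pos: "\<forall>d\<in>{1..D}. 0 < m d \<and> m d \<le> 1"
    and m_sum: "(\<Sum>d\<in>{1..D}. m d) = 1"
    and n_pos: "\<forall>d\<in>{1..D}. n d \<ge> 1"
    and s_range: "\<forall>d\<in>{1..D}. \<forall>i\<in>{1..n d}. 0 \<le> s d i \<and> s d i \<le> 1"
    and s_mono: "\<forall>d\<in>{1..D}. \<forall>i\<in>{1..n d}. \<forall>j\<in>{1..n d}. i < j \<longrightarrow> s d i < s d j"
    and lam_pos: "lam > 0" and gam_pos: "gam > 0" and r_neg: "r < 0"
    and hyp: "\<forall>d\<in>{1..D}. \<forall>i\<in>{1..n d}. lam * real d * (1 - s d i) > gam"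
    and xs_state: "xs \<in> social_states D m n"
  shows "(nash_eq lam gam r D m n s xs \<longleftrightarrow>
           (\<exists>ys. feasible lam gam r D m n s xs ys \<and>
              (\<forall>x y. feasible lam gam r D m n s x y \<longrightarrow>
                 objective lam gam r D m n s xs ys \<le> objective lam gam r D m n s x y)))
       \<and> (\<forall>x y. feasible lam gam r D m n s x y \<longrightarrow> objective lam gam r D m n s x y \<ge> 0)
       \<and> (\<exists>x y. feasible lam gam r D m n s x y \<and> objective lam gam r D m n s x y = 0)"
proof -
  interpret setting lam gam r D m n s
    using D_pos m_pos n_pos gam_pos hyp by unfold_locales auto
  have C2: "\<forall>x y. feasible lam gam r D m n s x y \<longrightarrow> objective lam gam r D m n s x y \<ge> 0"
    using obj_nonneg by blast
  obtain x0 where x0: "nash_eq lam gam r D m n s x0" using exists_nash by blast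
  have C3: "\<exists>x y. feasible lam gam r D m n s x y \<and> objective lam gam r D m n s x y = 0"
    using nash_obj[OF x0 n_pos] by blast
  have C1: "nash_eq lam gam r D m n s xs \<longleftrightarrow>
           (\<exists>ys. feasible lam gam r D m n s xs ys \<and>
              (\<forall>x y. feasible lam gam r D m n s x y \<longrightarrow>
                 objective lam gam r D m n s xs ys \<le> objective lam gam r D m n s x y))"
  proof
    assume ne: "nash_eq lam gam r D m n s xs"
    show "\<exists>ys. feasible lam gam r D m n s xs ys \<and>
              (\<forall>x y. feasible lam gam r D m n s x y \<longrightarrow>
                 objective lam gam r D m n s xs ys \<le> objective lam gam r D m n s x y)"
      using nash_obj[OF ne n_pos] C2 by fastforce
  next
    assume "\<exists>ys. feasible lam gam r D m n s xs ys \<and>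
              (\<forall>x y. feasible lam gam r D m n s x y \<longrightarrow>
                 objective lam gam r D m n s xs ys \<le> objective lam gam r D m n s x y)"
    then obtain ys where f: "feasible lam gam r D m n s xs ys" and
      mn: "\<forall>x y. feasible lam gam r D m n s x y \<longrightarrow>
                 objective lam gam r D m n s xs ys \<le> objective lam gam r D m n s x y" by blast
    obtain x1 y1 where "feasible lam gam r D m n s x1 y1" "objective lam gam r D m n s x1 y1 = 0"
      using C3 by blast
    then have "objective lam gam r D m n s xs ys \<le> 0" using mn by fastforce
    moreover have "objective lam gam r D m n s xs ys \<ge> 0" using C2 f by blast
    ultimately have "objective lam gam r D m n s xs ys = 0" by linarith
    then show "nash_eq lam gam r D m n s xs" by (rule obj_zero_nash[OF f])
  qed
  show ?thesis using C1 C2 C3 by blast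
qed

end
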